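(* Let $h\in\mathcal H$, $k_0=k_0(h)$, $h_0=h(k_0)$ and $h_1=h(k_0+1)$. Then $\operatorname{hdepth}(h)=k_0$ if and only if $h_0>h_1$.
   Context: $\mathcal H$ denotes the set of nonzero functions $h:\mathbb Z\to\mathbb Z_{\ge 0}$ such that $h(j)=0$ for all sufficiently negative $j$. For $h\in\mathcal H$ and integers $k\le d$, set $\beta_k^d(h)=\sum_{j\le k}(-1)^{k-j}\binom{d-j}{k-j}h(j)$, and $\operatorname{hdepth}(h)=\max\{d\in\mathbb Z:\ \beta_k^d(h)\ge 0\text{ for all integers }k\le d\}$. Also $k_0(h)=\min\{j: h(j)>0\}$. *)

theory Defs
  imports Main
begin

definition hclass :: "(int \<Rightarrow> nat) set" where
  "hclass = {h. (\<exists>j. h j \<noteq> 0) \<and> (\<exists>N. \<forall>j\<le>N. h j = 0)}"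

text \<open>beta_k^d(h) = sum_{j<=k} (-1)^(k-j) binom(d-j, k-j) h(j); terms with h j = 0 are omitted,
  which makes the index set finite for h in H.  Intended for k <= d.\<close>
definition beta :: "int \<Rightarrow> int \<Rightarrow> (int \<Rightarrow> nat) \<Rightarrow> int" where
  "beta k d h = (\<Sum>j\<in>{j. j \<le> k \<and> h j \<noteq> 0}.
      (-1) ^ nat (k - j) * int (nat (d - j) choose nat (k - j)) * int (h j))"

definition hdepth :: "(int \<Rightarrow> nat) \<Rightarrow> int" where
  "hdepth h = (GREATEST d. \<forall>k. k \<le> d \<longrightarrow> beta k d h \<ge> 0)"

definition k0 :: "(int \<Rightarrow> nat) \<Rightarrow> int" where
  "k0 h = (LEAST j. h j > 0)"

end

theory Submission
  imports Defs
begin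

lemma k0_props:
  assumes "h \<in> hclass"
  shows "h (k0 h) > 0" "\<And>j. j < k0 h \<Longrightarrow> h j = 0"
proof -
  obtain j0 N where j0: "h j0 \<noteq> 0" and N: "\<forall>j\<le>N. h j = 0"
    using assms unfolding hclass_def by blast
  have "j0 > N" using j0 N by (meson not_le)
  define f where "f n = h (N + 1 + int n)" for n
  have ex: "f (nat (j0 - N - 1)) > 0" using j0 \<open>j0 > N\<close> unfolding f_def by simp
  define m where "m = (LEAST n. f n > 0)"
  have fm: "f m > 0" unfolding m_def by (rule LeastI, rule ex)
  have fless: "\<And>n. n < m \<Longrightarrow> f n = 0" unfolding m_def using not_less_Least by blast
  have L: "k0 h = N + 1 + int m"
    unfolding k0_def
  proof (rule Least_equality)
    show "0 < h (N + 1 + int m)" using fm f_def by simp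
    fix y assume y: "0 < h y"
    show "N + 1 + int m \<le> y"
    proof (rule ccontr)
      assume "\<not> ?thesis"
      hence yl: "y < N + 1 + int m" by simp
      show False
      proof (cases "y \<le> N")
        case True thus False using N y by auto
      next
        case False
        hence "nat (y - N - 1) < m" using yl by linarith
        hence "f (nat (y - N - 1)) = 0" by (rule fless)
        moreover have "N + 1 + int (nat (y - N - 1)) = y" using False by simp
        ultimately show False using y f_def by simp
      qed
    qed
  qed
  show "h (k0 h) > 0" using fm L f_def by simp
  fix j assume "j < k0 h"
  show "h j = 0"
  proof (cases "j \<le> N")
    case True thus ?thesis using N by auto
  next
    case False
    hence "nat (j - N - 1) < m" using \<open>j < k0 h\<close> L by linarith
    hence "f (nat (j - N - 1)) = 0" by (rule fless)
    moreover have "N + 1 + int (nat (j - N - 1)) = j" using False by simp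
    ultimately show ?thesis using f_def by simp
  qed
qed

lemma beta_interval:
  assumes "\<And>j. j < a \<Longrightarrow> h j = 0"
  shows "beta k d h = (\<Sum>j\<in>{a..k}.
      (-1) ^ nat (k - j) * int (nat (d - j) choose nat (k - j)) * int (h j))"
  unfolding beta_def
proof (rule sum.mono_neutral_left)
  show "finite {a..k}" by simp
  show "{j. j \<le> k \<and> h j \<noteq> 0} \<subseteq> {a..k}" using assms by (auto simp: not_less[symmetric])
  show "\<forall>i\<in>{a..k} - {j. j \<le> k \<and> h j \<noteq> 0}.
      (-1) ^ nat (k - i) * int (nat (d - i) choose nat (k - i)) * int (h i) = 0" by auto
qed

lemma beta_small:
  assumes "\<And>j. j < a \<Longrightarrow> h j = 0" "k < a"
  shows "beta k d h = 0"
  using beta_interval[OF assms(1)] assms(2) by simp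

lemma beta_a:
  assumes "\<And>j. j < a \<Longrightarrow> h j = 0"
  shows "beta a d h = int (h a)"
  using beta_interval[OF assms(1), where k=a] by simp

lemma beta_a1:
  assumes "\<And>j. j < a \<Longrightarrow> h j = 0" "d \<ge> a + 1"
  shows "beta (a+1) d h = int (h (a+1)) - (d - a) * int (h a)"
proof -
  have "{a..a+1} = {a, a+1}" by auto
  hence "beta (a+1) d h = (-1) ^ nat (a + 1 - a) * int (nat (d - a) choose nat (a + 1 - a)) * int (h a)
     + (-1) ^ nat (a + 1 - (a+1)) * int (nat (d - (a+1)) choose nat (a + 1 - (a+1))) * int (h (a+1))"
    using beta_interval[OF assms(1), where k="a+1" and d=d] by simp
  also have "\<dots> = int (h (a+1)) - (d - a) * int (h a)" using assms(2) by (simp add: algebra_simps)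
  finally show ?thesis .
qed

theorem corollary1p6:
  fixes h :: "int \<Rightarrow> nat"
  assumes "h \<in> hclass"
  shows "hdepth h = k0 h \<longleftrightarrow> h (k0 h) > h (k0 h + 1)"
proof -
  define a where "a = k0 h"
  have pos: "h a > 0" and z: "\<And>j. j < a \<Longrightarrow> h j = 0" using k0_props[OF assms] a_def by auto
  define P where "P d = (\<forall>k. k \<le> d \<longrightarrow> beta k d h \<ge> 0)" for d
  have hd: "hdepth h = Greatest P" unfolding hdepth_def P_def by simp
  have low: "\<And>k d. k \<le> a \<Longrightarrow> beta k d h \<ge> 0"
  proof -
    fix k d assume "k \<le> a"
    show "beta k d h \<ge> 0"
    proof (cases "k < a")
      case True thus ?thesis using beta_small[OF z] by simp
    next
      case False thus ?thesis using beta_a[OF z] \<open>k \<le> a\<close> by (simp add: antisym_conv2)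
    qed
  qed
  have Pa: "P a" unfolding P_def using low by auto
  have fail: "\<And>d. d \<ge> a + 1 \<Longrightarrow> P d \<Longrightarrow> int (h (a+1)) \<ge> (d - a) * int (h a)"
    unfolding P_def using beta_a1[OF z] by fastforce
  have bound: "\<And>d. P d \<Longrightarrow> d \<le> a + int (h (a+1))"
  proof (rule ccontr)
    fix d assume Pd: "P d" and "\<not> d \<le> a + int (h (a+1))"
    hence d1: "d - a \<ge> int (h (a+1)) + 1" by simp
    have "(d - a) * int (h a) \<ge> (int (h (a+1)) + 1) * 1"
      using pos d1 by (intro mult_mono) auto
    thus False using fail[OF _ Pd] d1 by simp
  qed
  show ?thesis
  proof
    assume eq: "hdepth h = k0 h"
    show "h (k0 h) > h (k0 h + 1)"
    proof (rule ccontr)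
      assume "\<not> ?thesis"
      hence le: "h a \<le> h (a+1)" using a_def by simp
      have Pa1: "P (a+1)" unfolding P_def
      proof (intro allI impI)
        fix k assume "k \<le> a + 1"
        show "beta k (a+1) h \<ge> 0"
        proof (cases "k \<le> a")
          case True thus ?thesis using low by simp
        next
          case False
          hence "k = a + 1" using \<open>k \<le> a + 1\<close> by simp
          thus ?thesis using beta_a1[OF z, where d="a+1"] le by simp
        qed
      qed
      define S where "S = {d. P d \<and> a \<le> d \<and> d \<le> a + int (h (a+1))}"
      have fS: "finite S" unfolding S_def by (rule finite_subset[of _ "{a..a + int (h (a+1))}"]) auto
      have inS: "a + 1 \<in> S" unfolding S_def using Pa1 bound[OF Pa1] by simp
      define m where "m = Max S"
      have mS: "m \<in> S" unfolding m_def using fS inS Max_in by blast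
      have "Greatest P = m"
      proof (rule Greatest_equality)
        show "P m" using mS S_def by simp
        fix y assume "P y"
        show "y \<le> m"
        proof (cases "a \<le> y")
          case True
          hence "y \<in> S" unfolding S_def using \<open>P y\<close> bound by simp
          thus ?thesis unfolding m_def using fS by simp
        next
          case False thus ?thesis using mS S_def by simp
        qed
      qed
      moreover have "m \<ge> a + 1" unfolding m_def using fS inS by simp
      ultimately show False using eq hd a_def by simp
    qed
  next
    assume gt: "h (k0 h) > h (k0 h + 1)"
    have "Greatest P = a"
    proof (rule Greatest_equality)
      show "P a" by (rule Pa)
      fix y assume "P y"
      show "y \<le> a"
      proof (rule ccontr)
        assume "\<not> y \<le> a"
        hence y1: "y \<ge> a + 1" by simp
        have "(y - a) * int (h a) \<ge> 1 * int (h a)" using y1 by (intro mult_right_mono) auto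
        moreover have "h (a+1) < h a" using gt a_def by simp
        ultimately show False using fail[OF y1 \<open>P y\<close>] by linarith
      qed
    qed
    thus "hdepth h = k0 h" using hd a_def by simp
  qed
qed

end
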